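(* Let $(\mathcal G_t)\subseteq(\mathcal F_t)$ be a filtration, $(\rho^n)_{n\ge1}\subset\mathcal A^\circ(\mathcal G_t)$ and $\rho\in\mathcal A^\circ(\mathcal G_t)$ with $\rho^n\to\rho$ $(\lambda\times\mathbb P)$-a.e. Then for any $t\in[0,T]$ and any random variable $X\ge0$ with $\mathbb E[X]<\infty$, $$\limsup_{n\to\infty}\mathbb E[X\Delta\rho^n_t]\le\mathbb E[X\Delta\rho_t],$$ where $\Delta\rho_t=\rho_t-\rho_{t-}$.
   Context: $(\Omega,\mathcal F,\mathbb P)$ complete probability space with filtration $(\mathcal F_t)_{t\in[0,T]}$, $T\in(0,\infty]$; $\lambda$ is Lebesgue measure on $[0,T]$. $\mathcal A^\circ(\mathcal G_t)$ is the set of $(\mathcal G_t)$-adapted processes $\rho$ with, for all $\omega$, $t\mapsto\rho_t(\omega)$ càdlàg non-decreasing, $\rho_{0-}(\omega)=0$, $\rho_T(\omega)=1$. *)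

theory Defs
  imports "HOL-Probability.Probability"
begin

text \<open>Time is modelled in ereal so that the horizon T may be infinite;
  the time set is the ereal interval {0..T}.  Left limit with the
  convention rho_{0-} = 0.\<close>

definition left_lim :: "(ereal \<Rightarrow> real) \<Rightarrow> ereal \<Rightarrow> real" where
  "left_lim f t = (if t \<le> 0 then 0 else Lim (at_left t) f)"

definition jump :: "(ereal \<Rightarrow> real) \<Rightarrow> ereal \<Rightarrow> real" where
  "jump f t = f t - left_lim f t"

text \<open>The class A-circle(G_t): adapted processes with, for every omega, cadlag
  non-decreasing paths on [0,T], rho_{0-} = 0 (so rho_0 >= 0) and rho_T = 1.\<close>

definition A0 :: "'a measure \<Rightarrow> ereal \<Rightarrow> (ereal \<Rightarrow> 'a measure) \<Rightarrow> (ereal \<Rightarrow> 'a \<Rightarrow> real) \<Rightarrow> bool" where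
  "A0 M T G \<rho> \<longleftrightarrow>
     (\<forall>t\<in>{0..T}. \<rho> t \<in> borel_measurable (G t)) \<and>
     (\<forall>\<omega>\<in>space M.
        mono_on {0..T} (\<lambda>t. \<rho> t \<omega>) \<and>
        0 \<le> \<rho> 0 \<omega> \<and>
        \<rho> T \<omega> = 1 \<and>
        (\<forall>t\<in>{0..<T}. ((\<lambda>s. \<rho> s \<omega>) \<longlongrightarrow> \<rho> t \<omega>) (at_right t)))"

end

theory Submission
  imports Defs
begin

lemma left_lim_mono:
  fixes f :: "ereal \<Rightarrow> real"
  assumes mono: "mono_on {0..T} f" and t0: "0 < t" and tT: "t \<le> T"
  shows "(f \<longlongrightarrow> left_lim f t) (at_left t)"
    and "\<And>p. 0 \<le> p \<Longrightarrow> p < t \<Longrightarrow> f p \<le> left_lim f t"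
    and "left_lim f t \<le> f t"
proof -
  define L where "L = Sup (f ` {0..<t})"
  have bdd: "bdd_above (f ` {0..<t})"
    by (rule bdd_aboveI[where M="f t"]) (use tT in \<open>auto intro!: mono_onD[OF mono]\<close>)
  have ne: "{0..<t} \<noteq> {}" using t0 by auto
  have up: "f p \<le> L" if "0 \<le> p" "p < t" for p
    unfolding L_def using that by (intro cSUP_upper[OF _ bdd]) auto
  have Lle: "L \<le> f t"
    unfolding L_def using tT by (intro cSUP_least[OF ne]) (auto intro!: mono_onD[OF mono])
  have lim: "(f \<longlongrightarrow> L) (at_left t)"
  proof (rule increasing_tendsto)
    show "\<forall>\<^sub>F n in at_left t. f n \<le> L"
      unfolding eventually_at_left[OF t0] using t0 by (intro exI[of _ 0]) (auto intro!: up)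
    fix x assume "x < L"
    then obtain p where p: "p \<in> {0..<t}" "x < f p"
      unfolding L_def using less_cSUP_iff[OF ne bdd] by blast
    show "\<forall>\<^sub>F n in at_left t. x < f n"
      unfolding eventually_at_left[OF t0] using p tT
    proof (intro exI[of _ p] conjI allI impI)
      fix y assume y: "p < y" "y < t"
      have "f p \<le> f y" using p y tT by (intro mono_onD[OF mono]) auto
      then show "x < f y" using p by simp
    qed (use p in auto)
  qed
  have nt: "\<not> trivial_limit (at_left t)"
  proof
    assume "trivial_limit (at_left t)"
    then have "eventually (\<lambda>_. False) (at_left t)" by (simp add: trivial_limit_def)
    then obtain b where "b < t" "\<forall>y>b. y < t \<longrightarrow> False"
      unfolding eventually_at_left[OF t0] by blast
    then show False using dense[of b t] by blast
  qed
  have eq: "left_lim f t = L"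
    unfolding left_lim_def using t0 tendsto_Lim[OF nt lim] by simp
  show "(f \<longlongrightarrow> left_lim f t) (at_left t)" using lim eq by simp
  show "\<And>p. 0 \<le> p \<Longrightarrow> p < t \<Longrightarrow> f p \<le> left_lim f t" using up eq by simp
  show "left_lim f t \<le> f t" using Lle eq by simp
qed

lemma A0_props:
  assumes A: "A0 M T G r" and sub1: "\<forall>s\<in>{0..T}. subalgebra M (F s)"
    and sub2: "\<forall>s\<in>{0..T}. subalgebra (F s) (G s)"
  shows "\<And>s. s \<in> {0..T} \<Longrightarrow> r s \<in> borel_measurable M"
    and "\<And>s \<omega>. s \<in> {0..T} \<Longrightarrow> \<omega> \<in> space M \<Longrightarrow> 0 \<le> r s \<omega> \<and> r s \<omega> \<le> 1"
    and "\<And>\<omega>. \<omega> \<in> space M \<Longrightarrow> mono_on {0..T} (\<lambda>s. r s \<omega>)"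
    and "\<And>\<omega>. \<omega> \<in> space M \<Longrightarrow> r T \<omega> = 1"
    and "\<And>\<omega> t. \<omega> \<in> space M \<Longrightarrow> t \<in> {0..<T} \<Longrightarrow> ((\<lambda>s. r s \<omega>) \<longlongrightarrow> r t \<omega>) (at_right t)"
proof -
  show "r s \<in> borel_measurable M" if "s \<in> {0..T}" for s
    using A sub1 sub2 that unfolding A0_def
    by (meson measurable_from_subalg)
  show "\<And>\<omega>. \<omega> \<in> space M \<Longrightarrow> mono_on {0..T} (\<lambda>s. r s \<omega>)"
    and "\<And>\<omega>. \<omega> \<in> space M \<Longrightarrow> r T \<omega> = 1"
    and "\<And>\<omega> t. \<omega> \<in> space M \<Longrightarrow> t \<in> {0..<T} \<Longrightarrow> ((\<lambda>s. r s \<omega>) \<longlongrightarrow> r t \<omega>) (at_right t)"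
    using A unfolding A0_def by auto
  show "0 \<le> r s \<omega> \<and> r s \<omega> \<le> 1" if "s \<in> {0..T}" "\<omega> \<in> space M" for s \<omega>
  proof -
    have m: "mono_on {0..T} (\<lambda>s. r s \<omega>)" "0 \<le> r 0 \<omega>" "r T \<omega> = 1"
      using A that unfolding A0_def by auto
    have "r 0 \<omega> \<le> r s \<omega>" "r s \<omega> \<le> r T \<omega>"
      using that by (auto intro!: mono_onD[OF m(1)])
    then show ?thesis using m by auto
  qed
qed

theorem mainTheorem12:
  fixes M :: "'a measure" and T :: ereal
    and F G :: "ereal \<Rightarrow> 'a measure"
    and \<rho>n :: "nat \<Rightarrow> ereal \<Rightarrow> 'a \<Rightarrow> real" and \<rho> :: "ereal \<Rightarrow> 'a \<Rightarrow> real"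
    and t :: ereal and X :: "'a \<Rightarrow> real"
  assumes "prob_space M" and "complete_measure M"
    and "0 < T"
    and "\<forall>s\<in>{0..T}. subalgebra M (F s)"
    and "\<forall>s\<in>{0..T}. \<forall>u\<in>{0..T}. s \<le> u \<longrightarrow> sets (F s) \<subseteq> sets (F u)"
    and "\<forall>s\<in>{0..T}. subalgebra (F s) (G s)"
    and "\<forall>s\<in>{0..T}. \<forall>u\<in>{0..T}. s \<le> u \<longrightarrow> sets (G s) \<subseteq> sets (G u)"
    and "\<forall>n. A0 M T G (\<rho>n n)"
    and "A0 M T G \<rho>"
    and "AE (s, \<omega>) in (restrict_space lborel {x::real. 0 \<le> x \<and> ereal x \<le> T} \<Otimes>\<^sub>M M).
           (\<lambda>n. \<rho>n n (ereal s) \<omega>) \<longlonglongrightarrow> \<rho> (ereal s) \<omega>"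
    and "t \<in> {0..T}"
    and "X \<in> borel_measurable M" and "\<forall>\<omega>\<in>space M. 0 \<le> X \<omega>" and "integrable M X"
  shows "limsup (\<lambda>n. ereal (\<integral>\<omega>. X \<omega> * jump (\<lambda>s. \<rho>n n s \<omega>) t \<partial>M))
           \<le> ereal (\<integral>\<omega>. X \<omega> * jump (\<lambda>s. \<rho> s \<omega>) t \<partial>M)"
proof -
  note assms_all = assms
  interpret prob_space M by fact
  note T0 = \<open>0 < T\<close> and sub1 = assms(4) and sub2 = assms(6)
  note Xm = \<open>X \<in> borel_measurable M\<close> and Xnn = assms(13) and Xi = \<open>integrable M X\<close>
  note tT = \<open>t \<in> {0..T}\<close>
  note Pn = A0_props[OF spec[OF assms(8)] sub1 sub2]
  note P = A0_props[OF assms(9) sub1 sub2]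
  define D where "D = {x::real. 0 \<le> x \<and> ereal x \<le> T}"
  define Good where "Good = {x\<in>{0..T}. AE \<omega> in M. (\<lambda>n. \<rho>n n x \<omega>) \<longlonglongrightarrow> \<rho> x \<omega>}"
  define E where "E r x = (\<integral>\<omega>. X \<omega> * r x \<omega> \<partial>M)" for r :: "ereal \<Rightarrow> 'a \<Rightarrow> real" and x
  have integ: "integrable M (\<lambda>\<omega>. X \<omega> * r x \<omega>)"
    if "r x \<in> borel_measurable M" "\<And>\<omega>. \<omega> \<in> space M \<Longrightarrow> 0 \<le> r x \<omega> \<and> r x \<omega> \<le> 1" for r x
  proof (rule Bochner_Integration.integrable_bound[OF Xi])
    show "(\<lambda>\<omega>. X \<omega> * r x \<omega>) \<in> borel_measurable M" using that Xm by measurable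
    show "AE \<omega> in M. norm (X \<omega> * r x \<omega>) \<le> norm (X \<omega>)"
      using that(2) Xnn by (intro AE_I2) (auto simp: abs_mult intro!: mult_left_le)
  qed
  have conv: "(\<lambda>n. E (\<rho>n n) x) \<longlonglongrightarrow> E \<rho> x" if "x \<in> Good" for x
    unfolding E_def
  proof (rule integral_dominated_convergence[where w=X])
    have x: "x \<in> {0..T}" and ae: "AE \<omega> in M. (\<lambda>n. \<rho>n n x \<omega>) \<longlonglongrightarrow> \<rho> x \<omega>"
      using that unfolding Good_def by auto
    show "(\<lambda>\<omega>. X \<omega> * \<rho> x \<omega>) \<in> borel_measurable M" using P(1)[OF x] Xm by measurable
    show "(\<lambda>\<omega>. X \<omega> * \<rho>n n x \<omega>) \<in> borel_measurable M" for n using Pn(1)[OF x] Xm by measurable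
    show "integrable M X" by fact
    show "AE \<omega> in M. (\<lambda>n. X \<omega> * \<rho>n n x \<omega>) \<longlonglongrightarrow> X \<omega> * \<rho> x \<omega>"
      using ae by eventually_elim (auto intro: tendsto_mult_left)
    show "AE \<omega> in M. norm (X \<omega> * \<rho>n n x \<omega>) \<le> X \<omega>" for n
      using Pn(2)[OF x] Xnn by (intro AE_I2) (auto simp: abs_mult intro!: mult_left_le)
  qed
  have Dm: "D \<in> sets lborel" unfolding D_def by measurable
  have psf: "pair_sigma_finite (restrict_space lborel D) M"
    unfolding pair_sigma_finite_def
    using sigma_finite_measure_restrict_space[OF _ Dm] lborel.sigma_finite_measure_axioms
      sigma_finite_measure_axioms by auto
  have AEs: "AE s in restrict_space lborel D. AE \<omega> in M. (\<lambda>n. \<rho>n n (ereal s) \<omega>) \<longlonglongrightarrow> \<rho> (ereal s) \<omega>"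
    using pair_sigma_finite.AE_pair[OF psf assms(10)[folded D_def]] by simp
  then obtain N where N: "N \<in> null_sets (restrict_space lborel D)"
    "{s \<in> space (restrict_space lborel D). \<not> (AE \<omega> in M. (\<lambda>n. \<rho>n n (ereal s) \<omega>) \<longlonglongrightarrow> \<rho> (ereal s) \<omega>)} \<subseteq> N"
    unfolding eventually_ae_filter by blast
  have N0: "N \<in> null_sets lborel" using N(1) null_sets_restrict_space[OF Dm] by auto
  have sp: "space (restrict_space lborel D) = D" by (simp add: space_restrict_space)
  have rdens: "\<exists>s. c < s \<and> s < d \<and> ereal s \<in> Good" if "0 \<le> c" "c < d" "ereal d \<le> T" for c d :: real
  proof (rule ccontr)
    assume nex: "\<not> ?thesis"
    have "x \<in> N" if x: "c < x" "x < d" for x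
    proof -
      have "ereal x \<le> T" using x \<open>ereal d \<le> T\<close> by (meson ereal_less_eq(3) less_imp_le order_trans)
      then show ?thesis using N(2) x nex \<open>0 \<le> c\<close> unfolding sp Good_def D_def by auto
    qed
    then have "{c<..<d} \<subseteq> N" by auto
    then have "emeasure lborel {c<..<d} \<le> emeasure lborel N"
      using N0 by (intro emeasure_mono) auto
    then show False using N0 that by (simp add: null_setsD1)
  qed
  have dens: "\<exists>x\<in>Good. c < x \<and> x < d" if cd: "0 \<le> c" "c < d" "d \<le> T" for c d
  proof -
    obtain c' where c': "c = ereal c'" using cd by (cases c) auto
    show ?thesis
    proof (cases "d = \<infinity>")
      case True
      then have "T = \<infinity>" using cd by simp
      then obtain s where "c' < s" "s < c' + 1" "ereal s \<in> Good"
        using rdens[of c' "c' + 1"] cd c' by auto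
      then show ?thesis using c' True by (intro bexI[of _ "ereal s"]) auto
    next
      case False
      then obtain d' where d': "d = ereal d'" using cd by (cases d) auto
      then obtain s where "c' < s" "s < d'" "ereal s \<in> Good"
        using rdens[of c' d'] cd c' by auto
      then show ?thesis using c' d' by (intro bexI[of _ "ereal s"]) auto
    qed
  qed
  have t0T: "0 \<le> t" "t \<le> T" using tT by auto
  have "\<exists>p. 0 < t \<longrightarrow> (\<forall>k. p k \<in> Good \<and> p k < t) \<and> p \<longlonglongrightarrow> t"
  proof (cases "0 < t")
    case True
    have "t islimpt (Good \<inter> {..<t})"
      unfolding islimpt_def
    proof (intro allI impI)
      fix U assume U: "t \<in> U" "open U"
      from open_left[OF U(2,1) True] obtain b where b: "b < t" "{b<..t} \<subseteq> U" by blast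
      from dens[of "max b 0" t] obtain x where "x \<in> Good" "max b 0 < x" "x < t"
        using True t0T b by auto
      then show "\<exists>y\<in>Good \<inter> {..<t}. y \<in> U \<and> y \<noteq> t" using b by (intro bexI[of _ x]) auto
    qed
    then obtain f where "\<forall>n. f n \<in> Good \<inter> {..<t} - {t}" "f \<longlonglongrightarrow> t"
      unfolding islimpt_sequential by blast
    then show ?thesis by (intro exI[of _ f]) auto
  qed auto
  then obtain p where p: "0 < t \<Longrightarrow> \<forall>k. p k \<in> Good \<and> p k < t" "0 < t \<Longrightarrow> p \<longlonglongrightarrow> t" by blast
  have "\<exists>q. (\<forall>k. q k \<in> Good \<and> t \<le> q k) \<and> (\<forall>\<omega>\<in>space M. (\<lambda>k. \<rho> (q k) \<omega>) \<longlonglongrightarrow> \<rho> t \<omega>)"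
  proof (cases "t = T")
    case True
    have "T \<in> Good" unfolding Good_def using T0 Pn(4) P(4) by (auto intro!: AE_I2)
    then show ?thesis using True by (intro exI[of _ "\<lambda>k. T"]) auto
  next
    case False
    then have tlT: "t < T" using t0T by auto
    have "t islimpt (Good \<inter> {t<..})"
      unfolding islimpt_def
    proof (intro allI impI)
      fix U assume U: "t \<in> U" "open U"
      from open_right[OF U(2,1) tlT] obtain b where b: "t < b" "{t..<b} \<subseteq> U" by blast
      from dens[of t "min b T"] obtain x where "x \<in> Good" "t < x" "x < min b T"
        using tlT t0T b by auto
      then show "\<exists>y\<in>Good \<inter> {t<..}. y \<in> U \<and> y \<noteq> t" using b by (intro bexI[of _ x]) auto
    qed
    then obtain f where f: "\<forall>n. f n \<in> Good \<inter> {t<..} - {t}" "f \<longlonglongrightarrow> t"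
      unfolding islimpt_sequential by blast
    have fl: "filterlim f (at_right t) sequentially"
      using f by (auto simp: filterlim_at intro!: always_eventually)
    have "(\<lambda>k. \<rho> (f k) \<omega>) \<longlonglongrightarrow> \<rho> t \<omega>" if "\<omega> \<in> space M" for \<omega>
      using filterlim_compose[OF P(5)[OF that, of t] fl] tlT t0T by auto
    then show ?thesis using f by (intro exI[of _ f]) (auto intro: less_imp_le)
  qed
  then obtain q where q: "\<And>k. q k \<in> Good" "\<And>k. t \<le> q k"
    "\<And>\<omega>. \<omega> \<in> space M \<Longrightarrow> (\<lambda>k. \<rho> (q k) \<omega>) \<longlonglongrightarrow> \<rho> t \<omega>" by blast
  have GoodT: "Good \<subseteq> {0..T}" unfolding Good_def by auto
  define lo where "lo r k \<omega> = (if t = 0 then 0 else r (p k) \<omega>)"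
    for r :: "ereal \<Rightarrow> 'a \<Rightarrow> real" and k \<omega>
  define EL where "EL r k = E r (q k) - (if t = 0 then 0 else E r (p k))"
    for r :: "ereal \<Rightarrow> 'a \<Rightarrow> real" and k
  define OK where "OK r \<longleftrightarrow> (\<forall>s\<in>{0..T}. r s \<in> borel_measurable M) \<and>
     (\<forall>\<omega>\<in>space M. mono_on {0..T} (\<lambda>s. r s \<omega>) \<and> (\<forall>s\<in>{0..T}. 0 \<le> r s \<omega> \<and> r s \<omega> \<le> 1))"
    for r :: "ereal \<Rightarrow> 'a \<Rightarrow> real"
  have OKn: "OK (\<rho>n n)" for n unfolding OK_def using Pn by auto
  have OK: "OK \<rho>" unfolding OK_def using P by auto
  have pG: "p k \<in> {0..T}" "p k < t" if "t \<noteq> 0" for k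
  proof -
    have "0 < t" using that t0T by auto
    then have "p k \<in> Good" "p k < t" using p(1) by auto
    then show "p k \<in> {0..T}" "p k < t" using GoodT by auto
  qed
  have qG: "q k \<in> {0..T}" for k using q(1)[of k] GoodT by blast
  have key: "jump (\<lambda>s. r s \<omega>) t \<le> r (q k) \<omega> - lo r k \<omega> \<and> 0 \<le> lo r k \<omega> \<and> lo r k \<omega> \<le> r (q k) \<omega>
      \<and> r (q k) \<omega> \<le> 1"
    if "OK r" "\<omega> \<in> space M" for r \<omega> k
  proof -
    have m: "mono_on {0..T} (\<lambda>s. r s \<omega>)" and b: "\<And>s. s\<in>{0..T} \<Longrightarrow> 0 \<le> r s \<omega> \<and> r s \<omega> \<le> 1"
      using that unfolding OK_def by auto
    have rq: "r t \<omega> \<le> r (q k) \<omega>" using qG q(2) tT by (intro mono_onD[OF m]) auto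
    show ?thesis
    proof (cases "t = 0")
      case True
      then show ?thesis using rq b[OF qG] unfolding lo_def jump_def left_lim_def by auto
    next
      case False
      then have tp: "0 < t" using t0T by auto
      have "r (p k) \<omega> \<le> left_lim (\<lambda>s. r s \<omega>) t"
        using left_lim_mono(2)[OF m tp t0T(2)] pG[OF False] by auto
      moreover have "left_lim (\<lambda>s. r s \<omega>) t \<le> r t \<omega>"
        using left_lim_mono(3)[OF m tp t0T(2)] by auto
      moreover have "0 \<le> r (p k) \<omega>" using b pG[OF False] by auto
      ultimately show ?thesis using False rq b[OF qG] unfolding lo_def jump_def by auto
    qed
  qed
  have hmeas: "(\<lambda>\<omega>. X \<omega> * (r (q k) \<omega> - lo r k \<omega>)) \<in> borel_measurable M" if "OK r" for r k
  proof -
    have "r (q k) \<in> borel_measurable M" using that qG unfolding OK_def by auto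
    moreover have "lo r k \<in> borel_measurable M"
    proof (cases "t = 0")
      case True then show ?thesis unfolding lo_def by simp
    next
      case False then show ?thesis using that pG[OF False] unfolding OK_def lo_def[abs_def] by auto
    qed
    ultimately show ?thesis using Xm by measurable
  qed
  have hbound: "norm (X \<omega> * (r (q k) \<omega> - lo r k \<omega>)) \<le> X \<omega>" if "OK r" "\<omega> \<in> space M" for r k \<omega>
    using key[OF that, of k] Xnn that(2) by (auto simp: abs_mult intro!: mult_left_le)
  have hint: "integrable M (\<lambda>\<omega>. X \<omega> * (r (q k) \<omega> - lo r k \<omega>))" if "OK r" for r k
    using hbound[OF that] Xnn by (intro Bochner_Integration.integrable_bound[OF Xi hmeas[OF that]] AE_I2) auto
  have hEL: "(\<integral>\<omega>. X \<omega> * (r (q k) \<omega> - lo r k \<omega>) \<partial>M) = EL r k" if "OK r" for r k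
  proof (cases "t = 0")
    case True then show ?thesis unfolding lo_def EL_def E_def by simp
  next
    case False
    have i1: "integrable M (\<lambda>\<omega>. X \<omega> * r (q k) \<omega>)"
      using that qG unfolding OK_def by (intro integ) auto
    have i2: "integrable M (\<lambda>\<omega>. X \<omega> * r (p k) \<omega>)"
      using that pG[OF False] unfolding OK_def by (intro integ) auto
    show ?thesis using False Bochner_Integration.integral_diff[OF i1 i2]
      unfolding lo_def EL_def E_def by (simp add: right_diff_distrib)
  qed
  have nbound: "(\<integral>\<omega>. X \<omega> * jump (\<lambda>s. \<rho>n n s \<omega>) t \<partial>M) \<le> EL (\<rho>n n) k" for n k
  proof -
    have "(\<integral>\<omega>. X \<omega> * jump (\<lambda>s. \<rho>n n s \<omega>) t \<partial>M)
        \<le> (\<integral>\<omega>. X \<omega> * (\<rho>n n (q k) \<omega> - lo (\<rho>n n) k \<omega>) \<partial>M)"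
    proof (cases "integrable M (\<lambda>\<omega>. X \<omega> * jump (\<lambda>s. \<rho>n n s \<omega>) t)")
      case True
      show ?thesis
        using key[OF OKn] Xnn by (intro integral_mono[OF True hint[OF OKn]] mult_left_mono) auto
    next
      case False
      then show ?thesis using key[OF OKn] Xnn
        by (simp add: not_integrable_integral_eq)
    qed
    then show ?thesis using hEL[OF OKn] by simp
  qed
  have ELconv: "(\<lambda>n. EL (\<rho>n n) k) \<longlonglongrightarrow> EL \<rho> k" for k
  proof (cases "t = 0")
    case True then show ?thesis unfolding EL_def using conv[OF q(1)] by simp
  next
    case False then show ?thesis unfolding EL_def using conv[OF q(1)] conv p(1) t0T
      by (auto intro!: tendsto_diff)
  qed
  have ls: "limsup (\<lambda>n. ereal (\<integral>\<omega>. X \<omega> * jump (\<lambda>s. \<rho>n n s \<omega>) t \<partial>M)) \<le> ereal (EL \<rho> k)" for k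
  proof -
    have "limsup (\<lambda>n. ereal (\<integral>\<omega>. X \<omega> * jump (\<lambda>s. \<rho>n n s \<omega>) t \<partial>M))
        \<le> limsup (\<lambda>n. ereal (EL (\<rho>n n) k))"
      using nbound by (intro Limsup_mono) auto
    also have "\<dots> = ereal (EL \<rho> k)"
      by (intro lim_imp_Limsup) (auto intro: tendsto_ereal ELconv)
    finally show ?thesis .
  qed
  have plim: "(\<lambda>k. X \<omega> * (\<rho> (q k) \<omega> - lo \<rho> k \<omega>)) \<longlonglongrightarrow> X \<omega> * jump (\<lambda>s. \<rho> s \<omega>) t"
    if "\<omega> \<in> space M" for \<omega>
  proof -
    have "(\<lambda>k. lo \<rho> k \<omega>) \<longlonglongrightarrow> left_lim (\<lambda>s. \<rho> s \<omega>) t"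
    proof (cases "t = 0")
      case True then show ?thesis unfolding lo_def left_lim_def by simp
    next
      case False
      then have tp: "0 < t" using t0T by auto
      have fl: "filterlim p (at_left t) sequentially"
        using p[OF tp] by (auto simp: filterlim_at intro!: always_eventually)
      show ?thesis
        using filterlim_compose[OF left_lim_mono(1)[OF P(3)[OF that] tp t0T(2)] fl] False
        unfolding lo_def by simp
    qed
    then show ?thesis unfolding jump_def
      by (intro tendsto_mult_left tendsto_diff q(3)[OF that])
  qed
  have EL_lim: "(\<lambda>k. EL \<rho> k) \<longlonglongrightarrow> (\<integral>\<omega>. X \<omega> * jump (\<lambda>s. \<rho> s \<omega>) t \<partial>M)"
  proof -
    have "(\<lambda>k. \<integral>\<omega>. X \<omega> * (\<rho> (q k) \<omega> - lo \<rho> k \<omega>) \<partial>M) \<longlonglongrightarrow> (\<integral>\<omega>. X \<omega> * jump (\<lambda>s. \<rho> s \<omega>) t \<partial>M)"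
    proof (rule integral_dominated_convergence[where w=X])
      show "(\<lambda>\<omega>. X \<omega> * jump (\<lambda>s. \<rho> s \<omega>) t) \<in> borel_measurable M"
        by (rule borel_measurable_LIMSEQ_real[OF plim hmeas[OF OK]])
    qed (use hmeas[OF OK] Xi plim hbound[OF OK] in \<open>auto intro!: AE_I2\<close>)
    then show ?thesis using hEL[OF OK] by simp
  qed
  show ?thesis
    by (rule LIMSEQ_le_const[OF tendsto_ereal[OF EL_lim]]) (use ls in auto)
qed

end
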